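(* Let $F$ be an algebraically closed field of characteristic $\neq 2$, $R=F[t]$ with the involution ${}^*$ described in the context. Let $a,b\in R$ satisfy $\gcd(a,b)=1$ and $\gcd(b,b^* )=1$. Then there exist $x,y\in R$ with $x$ even (i.e. $x^*=x$) such that $ax+by=1$.
   Context: $R=F[t]$ is the polynomial ring over $F$, and ${}^*$ is the $F$-algebra involution of $R$ that is the identity on $F$ and sends $t$ to $-t$. An element $x\in R$ is even if $x^*=x$ (equivalently $x\in F[t^2]$). *)

theory Defs
  imports "HOL-Computational_Algebra.Computational_Algebra"
begin

definition inv_t :: "'a::comm_ring_1 poly \<Rightarrow> 'a poly" where
  "inv_t p = pcompose p [:0, -1:]"

end

theory Submission
  imports Defs
begin

lemma inv_t_mult: "inv_t (p * q) = inv_t p * inv_t q"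
  unfolding inv_t_def by (rule pcompose_mult)
lemma inv_t_add: "inv_t (p + q) = inv_t p + inv_t q"
  unfolding inv_t_def by (rule pcompose_add)
lemma inv_t_1: "inv_t 1 = 1"
  unfolding inv_t_def by (simp add: one_pCons)
lemma inv_t_smult: "inv_t (smult c p) = smult c (inv_t p)"
  unfolding inv_t_def by (rule pcompose_smult)
lemma inv_t_inv_t: "inv_t (inv_t (p::'a::comm_ring_1 poly)) = p"
proof -
  have "pcompose [:0, -1:] [:0, -1::'a:] = [:0, 1:]"
    by (simp add: pcompose_pCons)
  then show ?thesis unfolding inv_t_def
    by (simp add: pcompose_assoc[symmetric] pcompose_idR)
qed

theorem lemma3p2:
  fixes a b :: "'a::{alg_closed_field, field_gcd} poly"
  assumes "CHAR('a) \<noteq> 2"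
    and "gcd a b = 1"
    and "gcd b (inv_t b) = 1"
  shows "\<exists>x y. inv_t x = x \<and> a * x + b * y = 1"
proof -
  have two: "(2::'a) \<noteq> 0"
  proof
    assume "(2::'a) = 0"
    then have "of_nat 2 = (0::'a)" by simp
    then have "CHAR('a) dvd 2" by (simp only: of_nat_eq_0_iff_char_dvd)
    then have "CHAR('a) = 1 \<or> CHAR('a) = 2"
      using dvd_antisym by (metis nat_dvd_1_iff_1 two_is_prime_nat prime_nat_iff)
    moreover have "CHAR('a) \<noteq> 1" by simp
    ultimately show False using assms(1) by blast
  qed
  obtain u v where uv: "u * a + v * b = 1"
    using bezout_coefficients_fst_snd[of a b] assms(2) by metis
  obtain s t where st: "s * b + t * inv_t b = 1"
    using bezout_coefficients_fst_snd[of b "inv_t b"] assms(3) by metis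
  have st': "inv_t s * inv_t b + inv_t t * b = 1"
    using arg_cong[OF st, of inv_t] by (simp add: inv_t_add inv_t_mult inv_t_1 inv_t_inv_t)
  define x0 where "x0 = u * t * inv_t b + inv_t u * s * b"
  have ix0: "inv_t x0 = inv_t u * inv_t t * b + u * inv_t s * inv_t b"
    unfolding x0_def by (simp add: inv_t_add inv_t_mult inv_t_inv_t)
  have d1: "b dvd x0 - u"
  proof -
    have "x0 - u = u * (t * inv_t b - 1) + inv_t u * s * b" unfolding x0_def by (simp add: algebra_simps)
    also have "t * inv_t b - 1 = - s * b" using st by (simp add: algebra_simps)
    finally have "x0 - u = b * (inv_t u * s - u * s)" by (simp add: algebra_simps)
    then show ?thesis by simp
  qed
  have d2: "b dvd inv_t x0 - u"
  proof -
    have "inv_t x0 - u = inv_t u * inv_t t * b + u * (inv_t s * inv_t b - 1)" unfolding ix0 by (simp add: algebra_simps)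
    also have "inv_t s * inv_t b - 1 = - inv_t t * b" using st' by (simp add: algebra_simps)
    finally have "inv_t x0 - u = b * (inv_t u * inv_t t - u * inv_t t)" by (simp add: algebra_simps)
    then show ?thesis by simp
  qed
  define x where "x = smult (inverse 2) (x0 + inv_t x0)"
  have ev: "inv_t x = x" unfolding x_def
    by (simp add: inv_t_smult inv_t_add inv_t_inv_t add.commute)
  have "b dvd a * (x0 - u) + a * (inv_t x0 - u) - b * (2 * v)"
    using d1 d2 by simp
  moreover have "a * (x0 - u) + a * (inv_t x0 - u) - b * (2 * v) = a * (x0 + inv_t x0) - 2 * (u * a + v * b)"
    by (simp add: algebra_simps)
  ultimately have "b dvd a * (x0 + inv_t x0) - 2"
    using uv by simp
  then have dv: "b dvd smult (inverse 2) (a * (x0 + inv_t x0) - 2)"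
    by (simp add: dvd_smult)
  have h2: "smult (inverse 2) (2::'a poly) = 1"
  proof -
    have "smult (inverse 2) (2::'a poly) = smult (inverse 2) [:2:]"
      by (rule arg_cong[where f="smult (inverse 2)"], rule numeral_poly)
    also have "\<dots> = [:inverse 2 * 2:]" by (simp only: smult_pCons smult_0_right)
    also have "\<dots> = 1" by (simp only: left_inverse[OF two] one_pCons)
    finally show ?thesis .
  qed
  have eq: "smult (inverse 2) (a * (x0 + inv_t x0) - 2) = a * x - 1"
    unfolding x_def by (simp only: smult_diff_right mult_smult_right h2)
  from dv obtain k where k: "a * x - 1 = b * k" unfolding eq by (rule dvdE)
  have "a * x + b * (- k) = 1" using k by (simp add: algebra_simps)
  then show ?thesis using ev by blast
qed

end
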